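(* Let the premiums $\{X_n, n\geq 1\}$, the claims $\{Y_n, n\geq 1\}$ and the rates of interest $\{I_n, n\geq 1\}$ be mutually independent sequences of nonnegative i.i.d. random variables with finite expectations. For $u\geq 0$ define $U_0=u$, $U_n=U_{n-1}(1+I_n)+X_n-Y_n$ for $n\geq 1$, and $\Psi(u)=\mathbb{P}\big(\bigcup_{n=1}^\infty\{U_n<0\}\big)$. Let $$S_n=\sum_{i=1}^n\Big(\big(Y_i-X_i\big)\prod_{j=1}^{i-1}(1+I_j)^{-1}\Big),\quad n\geq 1,$$ with the empty product equal to $1$. If there exists a positive real number $R$ satisfying $$\mathbb{E}\Big(e^{R\left(Y_1-X_1\right)}\Big)\leq 1,$$ then $\{Z_n=e^{RS_n}, n\geq 1\}$ is a supermartingale (i.e. $\mathbb{E}(Z_{n+1}\mid Z_1,\dots,Z_n)\leq Z_n$ a.s. for all $n$), and $\Psi(u)\leq e^{-Ru}$ for all $u>0$. *)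

theory Defs
  imports "HOL-Probability.Probability"
begin

fun surplus :: "real \<Rightarrow> (nat \<Rightarrow> 'a \<Rightarrow> real) \<Rightarrow> (nat \<Rightarrow> 'a \<Rightarrow> real) \<Rightarrow> (nat \<Rightarrow> 'a \<Rightarrow> real)
                 \<Rightarrow> nat \<Rightarrow> 'a \<Rightarrow> real" where
  "surplus u X Y I 0 \<omega> = u"
| "surplus u X Y I (Suc n) \<omega> = surplus u X Y I n \<omega> * (1 + I (Suc n) \<omega>) + X (Suc n) \<omega> - Y (Suc n) \<omega>"

definition ruin_prob :: "'a measure \<Rightarrow> (nat \<Rightarrow> 'a \<Rightarrow> real) \<Rightarrow> (nat \<Rightarrow> 'a \<Rightarrow> real)
                 \<Rightarrow> (nat \<Rightarrow> 'a \<Rightarrow> real) \<Rightarrow> real \<Rightarrow> real" where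
  "ruin_prob M X Y I u = measure M (\<Union>n\<in>{1..}. {\<omega> \<in> space M. surplus u X Y I n \<omega> < 0})"

definition disc_loss :: "(nat \<Rightarrow> 'a \<Rightarrow> real) \<Rightarrow> (nat \<Rightarrow> 'a \<Rightarrow> real) \<Rightarrow> (nat \<Rightarrow> 'a \<Rightarrow> real)
                 \<Rightarrow> nat \<Rightarrow> 'a \<Rightarrow> real" where
  "disc_loss X Y I n \<omega> = (\<Sum>i\<in>{1..n}. (Y i \<omega> - X i \<omega>) * (\<Prod>j\<in>{1..<i}. inverse (1 + I j \<omega>)))"

definition natural_filtration :: "'a measure \<Rightarrow> (nat \<Rightarrow> 'a \<Rightarrow> real) \<Rightarrow> nat \<Rightarrow> 'a measure" where
  "natural_filtration M Z n =
     sigma (space M) {Z i -` A \<inter> space M | i A. 1 \<le> i \<and> i \<le> n \<and> A \<in> sets borel}"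

definition supermartingale :: "'a measure \<Rightarrow> (nat \<Rightarrow> 'a \<Rightarrow> real) \<Rightarrow> bool" where
  "supermartingale M Z \<longleftrightarrow>
     (\<forall>n\<ge>1. Z n \<in> borel_measurable M \<and> integrable M (Z n)) \<and>
     (\<forall>n\<ge>1. AE \<omega> in M. real_cond_exp M (natural_filtration M Z n) (Z (Suc n)) \<omega> \<le> Z n \<omega>)"

end

theory Submission
  imports Defs
begin


lemma (in prob_space) key:
  fixes Z :: "'i \<Rightarrow> 'a \<Rightarrow> real" and f :: "('i \<Rightarrow> real) \<Rightarrow> ennreal" and g h :: "('i \<Rightarrow> real) \<Rightarrow> real"
  assumes ind: "indep_vars (\<lambda>_. borel) Z I0" and KL: "K \<subseteq> I0" "L \<subseteq> I0" "K \<inter> L = {}"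
  and fm[measurable]: "f \<in> borel_measurable (PiM K (\<lambda>_. borel))"
  and gm[measurable]: "g \<in> borel_measurable (PiM K (\<lambda>_. borel))"
  and hm[measurable]: "h \<in> borel_measurable (PiM L (\<lambda>_. borel))"
  and hb: "\<And>c. 0 \<le> c \<Longrightarrow> c \<le> 1 \<Longrightarrow> (\<integral>\<^sup>+\<omega>. ennreal (exp (R * c * h (restrict (\<lambda>i. Z i \<omega>) L))) \<partial>M) \<le> 1"
  and g01: "\<And>x. 0 \<le> g x" "\<And>x. g x \<le> 1"
  shows "(\<integral>\<^sup>+\<omega>. f (restrict (\<lambda>i. Z i \<omega>) K) * ennreal (exp (R * g (restrict (\<lambda>i. Z i \<omega>) K) * h (restrict (\<lambda>i. Z i \<omega>) L))) \<partial>M)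
     \<le> (\<integral>\<^sup>+\<omega>. f (restrict (\<lambda>i. Z i \<omega>) K) \<partial>M)"
proof -
  let ?VK = "\<lambda>\<omega>. restrict (\<lambda>i. Z i \<omega>) K"
  let ?VL = "\<lambda>\<omega>. restrict (\<lambda>i. Z i \<omega>) L"
  let ?S = "PiM K (\<lambda>_. borel) :: ('i \<Rightarrow> real) measure"
  let ?T = "PiM L (\<lambda>_. borel) :: ('i \<Rightarrow> real) measure"
  have iv: "indep_var ?S ?VK ?T ?VL" using indep_var_restrict[OF ind KL(3) KL(1) KL(2)] .
  then have rv[measurable]: "?VK \<in> measurable M ?S" "?VL \<in> measurable M ?T"
    and eq: "distr M ?S ?VK \<Otimes>\<^sub>M distr M ?T ?VL = distr M (?S \<Otimes>\<^sub>M ?T) (\<lambda>x. (?VK x, ?VL x))"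
    using indep_var_distribution_eq by auto
  interpret D1: prob_space "distr M ?S ?VK" by (rule prob_space_distr) (rule rv)
  interpret D2: prob_space "distr M ?T ?VL" by (rule prob_space_distr) (rule rv)
  interpret P: pair_prob_space "distr M ?S ?VK" "distr M ?T ?VL" ..
  define \<phi> where "\<phi> = (\<lambda>p. f (fst p) * ennreal (exp (R * g (fst p) * h (snd p))))"
  have \<phi>m[measurable]: "\<phi> \<in> borel_measurable (?S \<Otimes>\<^sub>M ?T)" unfolding \<phi>_def by measurable
  have "(\<integral>\<^sup>+\<omega>. f (?VK \<omega>) * ennreal (exp (R * g (?VK \<omega>) * h (?VL \<omega>))) \<partial>M) = (\<integral>\<^sup>+\<omega>. \<phi> (?VK \<omega>, ?VL \<omega>) \<partial>M)"
    by (simp add: \<phi>_def)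
  also have "\<dots> = (\<integral>\<^sup>+p. \<phi> p \<partial>distr M (?S \<Otimes>\<^sub>M ?T) (\<lambda>x. (?VK x, ?VL x)))"
    by (subst nn_integral_distr) auto
  also have "\<dots> = (\<integral>\<^sup>+p. \<phi> p \<partial>(distr M ?S ?VK \<Otimes>\<^sub>M distr M ?T ?VL))"
    by (simp add: eq)
  also have "\<dots> = (\<integral>\<^sup>+v. \<integral>\<^sup>+w. \<phi> (v,w) \<partial>distr M ?T ?VL \<partial>distr M ?S ?VK)"
    by (rule D2.nn_integral_fst[symmetric]) (simp add: measurable_cong_sets[OF sets_pair_measure_cong[OF sets_distr sets_distr] refl])
  also have "\<dots> \<le> (\<integral>\<^sup>+v. f v \<partial>distr M ?S ?VK)"
  proof (rule nn_integral_mono)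
    fix v
    have "(\<integral>\<^sup>+w. \<phi> (v,w) \<partial>distr M ?T ?VL) = f v * (\<integral>\<^sup>+w. ennreal (exp (R * g v * h w)) \<partial>distr M ?T ?VL)"
      unfolding \<phi>_def by (simp add: nn_integral_cmult)
    also have "(\<integral>\<^sup>+w. ennreal (exp (R * g v * h w)) \<partial>distr M ?T ?VL) = (\<integral>\<^sup>+\<omega>. ennreal (exp (R * g v * h (?VL \<omega>))) \<partial>M)"
      by (subst nn_integral_distr) auto
    also have "\<dots> \<le> 1" using hb[of "g v"] g01[of v] by simp
    finally show "(\<integral>\<^sup>+w. \<phi> (v,w) \<partial>distr M ?T ?VL) \<le> f v"
      by (metis mult.right_neutral mult_left_mono zero_le)
  qed
  also have "\<dots> = (\<integral>\<^sup>+\<omega>. f (?VK \<omega>) \<partial>M)"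
    by (subst nn_integral_distr) auto
  finally show ?thesis .
qed




definition idx :: "(nat + nat + nat) set" where
  "idx = {Inl n | n. n \<ge> 1} \<union> {Inr (Inl n) | n. n \<ge> 1} \<union> {Inr (Inr n) | n. n \<ge> 1}"

definition hS :: "nat \<Rightarrow> (nat + nat + nat \<Rightarrow> real) \<Rightarrow> real" where
  "hS n x = (\<Sum>i\<in>{1..n}. (x (Inr (Inl i)) - x (Inl i)) * (\<Prod>j\<in>{1..<i}. inverse (1 + x (Inr (Inr j)))))"
definition hD :: "nat \<Rightarrow> (nat + nat + nat \<Rightarrow> real) \<Rightarrow> real" where
  "hD n x = (\<Prod>j\<in>{1..n}. inverse (1 + max 0 (x (Inr (Inr j)))))"
definition hT :: "nat \<Rightarrow> (nat + nat + nat \<Rightarrow> real) \<Rightarrow> real" where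
  "hT n x = (\<Sum>i\<in>{1..n}. (x (Inr (Inl i)) - x (Inl i)) * hD i x)"
definition hW :: "nat \<Rightarrow> (nat + nat + nat \<Rightarrow> real) \<Rightarrow> real" where
  "hW m x = x (Inr (Inl m)) - x (Inl m)"
definition Kr :: "nat \<Rightarrow> (nat + nat + nat) set" where
  "Kr N = {Inl i | i. 1 \<le> i \<and> i \<le> N} \<union> {Inr (Inl i) | i. 1 \<le> i \<and> i \<le> N} \<union> {Inr (Inr i) | i. 1 \<le> i \<and> i \<le> Suc N}"
definition Lw :: "nat \<Rightarrow> (nat + nat + nat) set" where
  "Lw m = {Inl m, Inr (Inl m)}"

fun hV :: "real \<Rightarrow> real \<Rightarrow> nat \<Rightarrow> (nat + nat + nat \<Rightarrow> real) \<Rightarrow> real" where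
  "hV u R 0 x = 1"
| "hV u R (Suc N) x = (if (\<forall>k\<in>{1..N}. hT k x \<le> u) then exp (R * hT (Suc N) x) else hV u R N x)"

lemma comp_meas[measurable]: "(\<lambda>x. x i) \<in> borel_measurable (PiM K (\<lambda>_. (borel :: real measure)))"
proof (cases "i \<in> K")
  case True then show ?thesis by (rule measurable_component_singleton)
next
  case False
  have "(\<lambda>x. undefined) \<in> borel_measurable (PiM K (\<lambda>_. (borel :: real measure)))" by simp
  then show ?thesis
    by (rule measurable_cong[THEN iffD1, rotated]) (use False in \<open>auto simp: space_PiM PiE_def extensional_def\<close>)
qed

lemma hS_meas[measurable]: "hS n \<in> borel_measurable (PiM K (\<lambda>_. borel))"
  unfolding hS_def by measurable
lemma hD_meas[measurable]: "hD n \<in> borel_measurable (PiM K (\<lambda>_. borel))"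
  unfolding hD_def by measurable
lemma hT_meas[measurable]: "hT n \<in> borel_measurable (PiM K (\<lambda>_. borel))"
  unfolding hT_def by measurable
lemma hW_meas[measurable]: "hW n \<in> borel_measurable (PiM K (\<lambda>_. borel))"
  unfolding hW_def by measurable
lemma hV_meas[measurable]: "hV u R n \<in> borel_measurable (PiM K (\<lambda>_. borel))"
  by (induction n) (simp_all, measurable)

lemma hD_pos: "0 < hD n x" unfolding hD_def
  by (intro prod_pos) (simp add: add_pos_nonneg)
lemma hD_le1: "hD n x \<le> 1" unfolding hD_def
  by (intro prod_le_1) (auto intro: inverse_le_1_iff[THEN iffD2] simp: add_pos_nonneg)

lemma hS_restr: "n \<le> N \<Longrightarrow> hS n (restrict x (Kr N)) = hS n x"
  by (auto simp: hS_def Kr_def intro!: sum.cong prod.cong)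
lemma hD_restr: "n \<le> Suc N \<Longrightarrow> hD n (restrict x (Kr N)) = hD n x"
  by (auto simp: hD_def Kr_def intro!: prod.cong)
lemma hT_restr: "hT n (restrict x (Kr N)) = hT n x" if "n \<le> N"
proof -
  have "\<And>i. i \<in> {1..n} \<Longrightarrow> hD i (restrict x (Kr N)) = hD i x" using that by (intro hD_restr) auto
  then show ?thesis using that unfolding hT_def by (intro sum.cong refl) (auto simp: Kr_def)
qed
lemma hV_restr: "n \<le> N \<Longrightarrow> hV u R n (restrict x (Kr N)) = hV u R n x"
  by (induction n) (auto simp: hT_restr)
lemma hW_restr: "hW m (restrict x (Lw m)) = hW m x"
  by (simp add: hW_def Lw_def)

lemma Kr_sub: "Kr N \<subseteq> idx" by (auto simp: Kr_def idx_def)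
lemma Lw_sub: "m \<ge> 1 \<Longrightarrow> Lw m \<subseteq> idx" by (auto simp: Lw_def idx_def)
lemma KL_disj: "Kr N \<inter> Lw (Suc N) = {}" by (auto simp: Kr_def Lw_def)




locale rsetup = prob_space M for M :: "'a measure" +
  fixes X Y I :: "nat \<Rightarrow> 'a \<Rightarrow> real" and R :: real
  assumes indep: "indep_vars (\<lambda>_. borel) (case_sum X (case_sum Y I)) idx"
    and idX: "\<And>n. n \<ge> 1 \<Longrightarrow> distr M borel (X n) = distr M borel (X 1)"
    and idY: "\<And>n. n \<ge> 1 \<Longrightarrow> distr M borel (Y n) = distr M borel (Y 1)"
    and nnI: "\<And>n \<omega>. n \<ge> 1 \<Longrightarrow> \<omega> \<in> space M \<Longrightarrow> I n \<omega> \<ge> 0"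
    and Rpos: "R > 0"
    and Rexp: "(\<integral>\<^sup>+ \<omega>. ennreal (exp (R * (Y 1 \<omega> - X 1 \<omega>))) \<partial>M) \<le> 1"
begin

abbreviation "Zv \<equiv> case_sum X (case_sum Y I)"

lemma Zv_meas: "i \<in> idx \<Longrightarrow> Zv i \<in> borel_measurable M"
  using indep by (auto simp: indep_vars_def)

lemma rvX[measurable]: "n \<ge> 1 \<Longrightarrow> X n \<in> borel_measurable M"
  using Zv_meas[of "Inl n"] by (auto simp: idx_def)
lemma rvY[measurable]: "n \<ge> 1 \<Longrightarrow> Y n \<in> borel_measurable M"
  using Zv_meas[of "Inr (Inl n)"] by (auto simp: idx_def)

lemma VK_meas: "K \<subseteq> idx \<Longrightarrow> (\<lambda>\<omega>. restrict (\<lambda>i. Zv i \<omega>) K) \<in> measurable M (PiM K (\<lambda>_. borel))"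
  using Zv_meas by (auto intro!: measurable_restrict)

lemma prod_XY:
  assumes m: "m \<ge> 1"
  shows "(\<integral>\<^sup>+ \<omega>. ennreal (exp (R * (Y m \<omega> - X m \<omega>))) \<partial>M)
     = (\<integral>\<^sup>+ \<omega>. ennreal (exp (- R * X m \<omega>)) \<partial>M) * (\<integral>\<^sup>+ \<omega>. ennreal (exp (R * Y m \<omega>)) \<partial>M)"
proof -
  let ?J = "{Inl m, Inr (Inl m)} :: (nat + nat + nat) set"
  let ?F = "\<lambda>i x. ennreal (if i = Inl m then exp (- R * x) else exp (R * (x::real)))"
  have "indep_vars (\<lambda>_. borel) Zv ?J"
    using indep_vars_subset[OF indep] m by (auto simp: idx_def)
  then have iv: "indep_vars (\<lambda>_. borel) (\<lambda>i \<omega>. ?F i (Zv i \<omega>)) ?J"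
    by (rule indep_vars_compose2) auto
  have "(\<integral>\<^sup>+\<omega>. (\<Prod>i\<in>?J. ?F i (Zv i \<omega>)) \<partial>M) = (\<Prod>i\<in>?J. \<integral>\<^sup>+\<omega>. ?F i (Zv i \<omega>) \<partial>M)"
    by (rule indep_vars_nn_integral[OF _ iv]) auto
  moreover have "\<And>\<omega>. ennreal (exp (R * (Y m \<omega> - X m \<omega>))) = ennreal (exp (- R * X m \<omega>)) * ennreal (exp (R * Y m \<omega>))"
    by (simp add: ennreal_mult'[symmetric] exp_diff exp_minus field_simps)
  ultimately show ?thesis by simp
qed

lemma W_int: assumes m: "m \<ge> 1"
  shows "(\<integral>\<^sup>+ \<omega>. ennreal (exp (R * (Y m \<omega> - X m \<omega>))) \<partial>M) \<le> 1"
proof -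
  have a: "(\<integral>\<^sup>+\<omega>. ennreal (exp (- R * X m \<omega>)) \<partial>M) = (\<integral>\<^sup>+\<omega>. ennreal (exp (- R * X 1 \<omega>)) \<partial>M)"
  proof -
    have "(\<integral>\<^sup>+\<omega>. ennreal (exp (- R * X m \<omega>)) \<partial>M) = (\<integral>\<^sup>+x. ennreal (exp (- R * x)) \<partial>distr M borel (X m))"
      using m by (subst nn_integral_distr) auto
    also have "\<dots> = (\<integral>\<^sup>+x. ennreal (exp (- R * x)) \<partial>distr M borel (X 1))" using idX[OF m] by simp
    also have "\<dots> = (\<integral>\<^sup>+\<omega>. ennreal (exp (- R * X 1 \<omega>)) \<partial>M)"
      by (subst nn_integral_distr) auto
    finally show ?thesis .
  qed
  have b: "(\<integral>\<^sup>+\<omega>. ennreal (exp (R * Y m \<omega>)) \<partial>M) = (\<integral>\<^sup>+\<omega>. ennreal (exp (R * Y 1 \<omega>)) \<partial>M)"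
  proof -
    have "(\<integral>\<^sup>+\<omega>. ennreal (exp (R * Y m \<omega>)) \<partial>M) = (\<integral>\<^sup>+x. ennreal (exp (R * x)) \<partial>distr M borel (Y m))"
      using m by (subst nn_integral_distr) auto
    also have "\<dots> = (\<integral>\<^sup>+x. ennreal (exp (R * x)) \<partial>distr M borel (Y 1))" using idY[OF m] by simp
    also have "\<dots> = (\<integral>\<^sup>+\<omega>. ennreal (exp (R * Y 1 \<omega>)) \<partial>M)"
      by (subst nn_integral_distr) auto
    finally show ?thesis .
  qed
  show ?thesis using prod_XY[OF m] prod_XY[of 1] a b Rexp by simp
qed

lemma W_bound: assumes m: "m \<ge> 1" and c: "0 \<le> c" "c \<le> 1"
  shows "(\<integral>\<^sup>+ \<omega>. ennreal (exp (R * c * (Y m \<omega> - X m \<omega>))) \<partial>M) \<le> 1"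
proof -
  have pw: "exp (R * c * w) \<le> (1 - c) + c * exp (R * w)" for w
    using convex_onD[OF exp_convex c, of 0 "R * w"] by (simp add: algebra_simps)
  have "(\<integral>\<^sup>+ \<omega>. ennreal (exp (R * c * (Y m \<omega> - X m \<omega>))) \<partial>M)
     \<le> (\<integral>\<^sup>+ \<omega>. ennreal (1 - c) + ennreal c * ennreal (exp (R * (Y m \<omega> - X m \<omega>))) \<partial>M)"
    using c by (intro nn_integral_mono) (simp add: ennreal_mult'[symmetric] ennreal_plus[symmetric] pw del: ennreal_plus)
  also have "\<dots> = ennreal (1 - c) + ennreal c * (\<integral>\<^sup>+ \<omega>. ennreal (exp (R * (Y m \<omega> - X m \<omega>))) \<partial>M)"
    using m by (simp add: nn_integral_add nn_integral_cmult emeasure_space_1)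
  also have "\<dots> \<le> ennreal (1 - c) + ennreal c * 1"
    by (intro add_left_mono mult_left_mono W_int[OF m]) auto
  also have "\<dots> = 1" using c by (simp add: ennreal_plus[symmetric] del: ennreal_plus)
  finally show ?thesis .
qed

lemma keyN:
  fixes f :: "(nat + nat + nat \<Rightarrow> real) \<Rightarrow> ennreal" and g :: "(nat + nat + nat \<Rightarrow> real) \<Rightarrow> real"
  assumes fm: "f \<in> borel_measurable (PiM (Kr N) (\<lambda>_. borel))"
    and gm: "g \<in> borel_measurable (PiM (Kr N) (\<lambda>_. borel))"
    and g01: "\<And>x. 0 \<le> g x" "\<And>x. g x \<le> 1"
  shows "(\<integral>\<^sup>+\<omega>. f (restrict (\<lambda>i. Zv i \<omega>) (Kr N)) * ennreal (exp (R * g (restrict (\<lambda>i. Zv i \<omega>) (Kr N)) * (Y (Suc N) \<omega> - X (Suc N) \<omega>))) \<partial>M)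
     \<le> (\<integral>\<^sup>+\<omega>. f (restrict (\<lambda>i. Zv i \<omega>) (Kr N)) \<partial>M)"
proof -
  have hw: "hW (Suc N) (restrict (\<lambda>i. Zv i \<omega>) (Lw (Suc N))) = Y (Suc N) \<omega> - X (Suc N) \<omega>" for \<omega>
    by (simp add: hW_def Lw_def)
  have "(\<integral>\<^sup>+\<omega>. f (restrict (\<lambda>i. Zv i \<omega>) (Kr N)) * ennreal (exp (R * g (restrict (\<lambda>i. Zv i \<omega>) (Kr N)) * hW (Suc N) (restrict (\<lambda>i. Zv i \<omega>) (Lw (Suc N))))) \<partial>M)
     \<le> (\<integral>\<^sup>+\<omega>. f (restrict (\<lambda>i. Zv i \<omega>) (Kr N)) \<partial>M)"
  proof (rule key[OF indep Kr_sub Lw_sub KL_disj fm gm])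
    show "hW (Suc N) \<in> borel_measurable (Pi\<^sub>M (Lw (Suc N)) (\<lambda>_. borel))" by measurable
    fix c :: real assume "0 \<le> c" "c \<le> 1"
    then show "(\<integral>\<^sup>+\<omega>. ennreal (exp (R * c * hW (Suc N) (restrict (\<lambda>i. Zv i \<omega>) (Lw (Suc N))))) \<partial>M) \<le> 1"
      unfolding hw by (intro W_bound) auto
  qed (use g01 in auto)
  then show ?thesis unfolding hw .
qed

lemma hS_step: assumes "\<omega> \<in> space M"
  shows "hS (Suc n) (\<lambda>i. Zv i \<omega>) = hS n (\<lambda>i. Zv i \<omega>) + hD n (\<lambda>i. Zv i \<omega>) * (Y (Suc n) \<omega> - X (Suc n) \<omega>)"
proof -
  have "(\<Prod>j\<in>{1..<Suc n}. inverse (1 + I j \<omega>)) = hD n (\<lambda>i. Zv i \<omega>)"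
    unfolding hD_def atLeastLessThanSuc_atLeastAtMost
    by (intro prod.cong refl) (use nnI[OF _ assms] in \<open>auto simp: max_def\<close>)
  then show ?thesis by (simp add: hS_def)
qed

lemma Z_bound: "(\<integral>\<^sup>+\<omega>. ennreal (exp (R * hS n (\<lambda>i. Zv i \<omega>))) \<partial>M) \<le> 1"
proof (induction n)
  case 0
  then show ?case by (simp add: hS_def emeasure_space_1)
next
  case (Suc n)
  let ?V = "\<lambda>\<omega>. restrict (\<lambda>i. Zv i \<omega>) (Kr n)"
  have "(\<integral>\<^sup>+\<omega>. ennreal (exp (R * hS (Suc n) (\<lambda>i. Zv i \<omega>))) \<partial>M)
     = (\<integral>\<^sup>+\<omega>. ennreal (exp (R * hS n (?V \<omega>))) * ennreal (exp (R * hD n (?V \<omega>) * (Y (Suc n) \<omega> - X (Suc n) \<omega>))) \<partial>M)"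
    by (intro nn_integral_cong) (simp add: hS_step hS_restr hD_restr ennreal_mult'[symmetric] mult_exp_exp algebra_simps)
  also have "\<dots> \<le> (\<integral>\<^sup>+\<omega>. ennreal (exp (R * hS n (?V \<omega>))) \<partial>M)"
    by (rule keyN) (auto simp: hD_pos less_imp_le hD_le1)
  also have "\<dots> = (\<integral>\<^sup>+\<omega>. ennreal (exp (R * hS n (\<lambda>i. Zv i \<omega>))) \<partial>M)"
    by (simp add: hS_restr)
  finally show ?case using Suc by simp
qed

lemma hT_Suc: "hT (Suc N) x = hT N x + hD (Suc N) x * hW (Suc N) x"
  by (simp add: hT_def hW_def)

lemma hV_A: "(\<forall>k\<in>{1..N}. hT k x \<le> u) \<Longrightarrow> hV u R N x = exp (R * hT N x)"
  by (cases N) (auto simp: hT_def)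

lemma hV_ge: "\<not> (\<forall>k\<in>{1..N}. hT k x \<le> u) \<Longrightarrow> exp (R * u) \<le> hV u R N x"
proof (induction N)
  case 0
  then show ?case by simp
next
  case (Suc N)
  show ?case
  proof (cases "\<forall>k\<in>{1..N}. hT k x \<le> u")
    case True
    with Suc.prems have "u < hT (Suc N) x" by (auto simp: le_Suc_eq)
    with True Rpos show ?thesis by simp
  next
    case False
    then show ?thesis using Suc.IH by auto
  qed
qed

lemma hV_bound: "(\<integral>\<^sup>+\<omega>. ennreal (hV u R N (\<lambda>i. Zv i \<omega>)) \<partial>M) \<le> 1"
proof (induction N)
  case 0
  then show ?case by (simp add: emeasure_space_1)
next
  case (Suc N)
  let ?V = "\<lambda>\<omega>. restrict (\<lambda>i. Zv i \<omega>) (Kr N)"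
  let ?A = "\<lambda>x. \<forall>k\<in>{1..N}. hT k x \<le> u"
  define f where "f = (\<lambda>x. ennreal (if ?A x then exp (R * hT N x) else 0))"
  have fm[measurable]: "f \<in> borel_measurable (PiM (Kr N) (\<lambda>_. borel))" unfolding f_def by measurable
  have Vm[measurable]: "?V \<in> measurable M (PiM (Kr N) (\<lambda>_. borel))" by (rule VK_meas[OF Kr_sub])
  have AV: "?A (?V \<omega>) = ?A (\<lambda>i. Zv i \<omega>)" for \<omega> by (simp add: hT_restr)
  have "(\<integral>\<^sup>+\<omega>. ennreal (hV u R (Suc N) (\<lambda>i. Zv i \<omega>)) \<partial>M)
     = (\<integral>\<^sup>+\<omega>. f (?V \<omega>) * ennreal (exp (R * hD (Suc N) (?V \<omega>) * (Y (Suc N) \<omega> - X (Suc N) \<omega>)))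
            + ennreal (if ?A (?V \<omega>) then 0 else hV u R N (?V \<omega>)) \<partial>M)"
    by (intro nn_integral_cong)
      (simp add: f_def AV hT_restr hD_restr hV_restr hT_Suc hW_def ennreal_mult'[symmetric] mult_exp_exp algebra_simps)
  also have "\<dots> = (\<integral>\<^sup>+\<omega>. f (?V \<omega>) * ennreal (exp (R * hD (Suc N) (?V \<omega>) * (Y (Suc N) \<omega> - X (Suc N) \<omega>))) \<partial>M)
            + (\<integral>\<^sup>+\<omega>. ennreal (if ?A (?V \<omega>) then 0 else hV u R N (?V \<omega>)) \<partial>M)"
    by (rule nn_integral_add) measurable
  also have "\<dots> \<le> (\<integral>\<^sup>+\<omega>. f (?V \<omega>) \<partial>M)
            + (\<integral>\<^sup>+\<omega>. ennreal (if ?A (?V \<omega>) then 0 else hV u R N (?V \<omega>)) \<partial>M)"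
    by (intro add_right_mono keyN fm) (auto simp: hD_pos less_imp_le hD_le1)
  also have "\<dots> = (\<integral>\<^sup>+\<omega>. f (?V \<omega>) + ennreal (if ?A (?V \<omega>) then 0 else hV u R N (?V \<omega>)) \<partial>M)"
    by (rule nn_integral_add[symmetric]) measurable
  also have "\<dots> = (\<integral>\<^sup>+\<omega>. ennreal (hV u R N (\<lambda>i. Zv i \<omega>)) \<partial>M)"
    by (intro nn_integral_cong) (simp add: f_def AV hV_restr hT_restr hV_A)
  finally show ?case using Suc by simp
qed

lemma B_sets: "{\<omega>\<in>space M. \<exists>k\<in>{1..N}. u < hT k (\<lambda>i. Zv i \<omega>)} \<in> sets M"
proof -
  let ?V = "\<lambda>\<omega>. restrict (\<lambda>i. Zv i \<omega>) (Kr N)"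
  have Vm[measurable]: "?V \<in> measurable M (PiM (Kr N) (\<lambda>_. borel))" by (rule VK_meas[OF Kr_sub])
  have "{\<omega>\<in>space M. \<exists>k\<in>{1..N}. u < hT k (\<lambda>i. Zv i \<omega>)} = {\<omega>\<in>space M. \<exists>k\<in>{1..N}. u < hT k (?V \<omega>)}"
    by (auto simp: hT_restr)
  also have "\<dots> \<in> sets M" by measurable
  finally show ?thesis .
qed

lemma ruinN: "measure M {\<omega>\<in>space M. \<exists>k\<in>{1..N}. u < hT k (\<lambda>i. Zv i \<omega>)} \<le> exp (- R * u)"
proof -
  let ?B = "{\<omega>\<in>space M. \<exists>k\<in>{1..N}. u < hT k (\<lambda>i. Zv i \<omega>)}"
  have "ennreal (exp (R * u) * measure M ?B) = (\<integral>\<^sup>+\<omega>. ennreal (exp (R * u)) * indicator ?B \<omega> \<partial>M)"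
    using B_sets by (simp add: nn_integral_cmult_indicator emeasure_eq_measure ennreal_mult')
  also have "\<dots> \<le> (\<integral>\<^sup>+\<omega>. ennreal (hV u R N (\<lambda>i. Zv i \<omega>)) \<partial>M)"
    by (intro nn_integral_mono) (auto simp: indicator_def intro!: ennreal_leI hV_ge dest: leD)
  also have "\<dots> \<le> 1" by (rule hV_bound)
  finally have "exp (R * u) * measure M ?B \<le> 1"
    by (simp add: ennreal_le_1)
  then show ?thesis by (simp add: exp_minus field_simps)
qed

lemma surplus_hT: "\<omega> \<in> space M \<Longrightarrow> surplus u X Y I n \<omega> * hD n (\<lambda>i. Zv i \<omega>) = u - hT n (\<lambda>i. Zv i \<omega>)"
proof (induction n)
  case 0
  then show ?case by (simp add: hD_def hT_def)
next
  case (Suc n)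
  have I0: "I (Suc n) \<omega> \<ge> 0" using nnI[OF _ Suc.prems] by simp
  have D: "hD (Suc n) (\<lambda>i. Zv i \<omega>) = hD n (\<lambda>i. Zv i \<omega>) * inverse (1 + I (Suc n) \<omega>)"
    using I0 by (simp add: hD_def max_def)
  have "surplus u X Y I (Suc n) \<omega> * hD (Suc n) (\<lambda>i. Zv i \<omega>)
     = surplus u X Y I n \<omega> * hD n (\<lambda>i. Zv i \<omega>) + (X (Suc n) \<omega> - Y (Suc n) \<omega>) * hD (Suc n) (\<lambda>i. Zv i \<omega>)"
    using I0 unfolding D by (simp add: field_simps)
  then show ?case using Suc by (simp add: hT_Suc hW_def algebra_simps)
qed

lemma ruin: "ruin_prob M X Y I u \<le> exp (- R * u)"
proof -
  define B where "B N = {\<omega>\<in>space M. \<exists>k\<in>{1..N}. u < hT k (\<lambda>i. Zv i \<omega>)}" for N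
  have eq: "(\<Union>n\<in>{1..}. {\<omega> \<in> space M. surplus u X Y I n \<omega> < 0}) = (\<Union>N. B N)"
  proof -
    have "surplus u X Y I n \<omega> < 0 \<longleftrightarrow> u < hT n (\<lambda>i. Zv i \<omega>)" if "\<omega> \<in> space M" for n \<omega>
    proof -
      have "surplus u X Y I n \<omega> < 0 \<longleftrightarrow> surplus u X Y I n \<omega> * hD n (\<lambda>i. Zv i \<omega>) < 0"
        using hD_pos[of n "\<lambda>i. Zv i \<omega>"] by (simp add: mult_less_0_iff)
      then show ?thesis using surplus_hT[OF that] by simp
    qed
    then show ?thesis by (auto simp: B_def) (metis atLeastAtMost_iff order_refl)
  qed
  have "(\<lambda>N. measure M (B N)) \<longlonglongrightarrow> measure M (\<Union>N. B N)"
    by (rule finite_Lim_measure_incseq) (use B_sets in \<open>auto simp: B_def incseq_def\<close>)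
  then have "measure M (\<Union>N. B N) \<le> exp (- R * u)"
    by (rule LIMSEQ_le_const2) (use ruinN in \<open>auto simp: B_def\<close>)
  then show ?thesis unfolding ruin_prob_def eq .
qed

definition "Zf n \<omega> = exp (R * disc_loss X Y I n \<omega>)"

lemma Zf_hS: "Zf n \<omega> = exp (R * hS n (\<lambda>i. Zv i \<omega>))"
  by (simp add: Zf_def disc_loss_def hS_def)

lemma Zf_V: "Zf n \<omega> = exp (R * hS n (restrict (\<lambda>i. Zv i \<omega>) (Kr N)))" if "n \<le> N"
  using that by (simp add: Zf_hS hS_restr)

lemma Zf_meas[measurable]: "Zf n \<in> borel_measurable M"
proof -
  have Vm[measurable]: "(\<lambda>\<omega>. restrict (\<lambda>i. Zv i \<omega>) (Kr n)) \<in> measurable M (PiM (Kr n) (\<lambda>_. borel))"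
    by (rule VK_meas[OF Kr_sub])
  have "(\<lambda>\<omega>. exp (R * hS n (restrict (\<lambda>i. Zv i \<omega>) (Kr n)))) \<in> borel_measurable M" by measurable
  then show ?thesis by (simp add: Zf_V[of n n, symmetric] del: restrict_apply)
qed

lemma Zf_int: "integrable M (Zf n)"
proof (rule integrableI_nonneg)
  show "(\<integral>\<^sup>+x. ennreal (Zf n x) \<partial>M) < \<infinity>"
    using Z_bound[of n] by (simp add: Zf_hS order_le_less_trans)
qed (auto simp: Zf_def)

end



context rsetup begin

lemma filt_props:
  assumes n: "n \<ge> 1"
  shows "subalgebra M (natural_filtration M Zf n)"
    and "Zf n \<in> borel_measurable (natural_filtration M Zf n)"
    and "\<And>A. A \<in> sets (natural_filtration M Zf n) \<Longrightarrow>
            \<exists>B\<in>sets (PiM (Kr n) (\<lambda>_. borel)). A = (\<lambda>\<omega>. restrict (\<lambda>i. Zv i \<omega>) (Kr n)) -` B \<inter> space M"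
proof -
  let ?G = "{Zf i -` A \<inter> space M | i A. 1 \<le> i \<and> i \<le> n \<and> A \<in> sets borel}"
  let ?V = "\<lambda>\<omega>. restrict (\<lambda>i. Zv i \<omega>) (Kr n)"
  let ?P = "PiM (Kr n) (\<lambda>_. borel) :: (nat + nat + nat \<Rightarrow> real) measure"
  have Vm[measurable]: "?V \<in> measurable M ?P" by (rule VK_meas[OF Kr_sub])
  have GP: "?G \<subseteq> Pow (space M)" by auto
  have sp: "space (natural_filtration M Zf n) = space M"
    unfolding natural_filtration_def by (simp add: space_measure_of_conv)
  have st: "sets (natural_filtration M Zf n) = sigma_sets (space M) ?G"
    unfolding natural_filtration_def by (rule sets_measure_of[OF GP])
  have GM: "?G \<subseteq> sets M" by auto
  show "subalgebra M (natural_filtration M Zf n)"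
    unfolding subalgebra_def sp st using sets.sigma_sets_subset[OF GM] by simp
  show "Zf n \<in> borel_measurable (natural_filtration M Zf n)"
    unfolding measurable_def sp st using n by (auto intro!: sigma_sets.Basic)
  have "?G \<subseteq> sets (vimage_algebra (space M) ?V ?P)"
  proof
    fix S assume "S \<in> ?G"
    then obtain i A where S: "S = Zf i -` A \<inter> space M" and i: "1 \<le> i" "i \<le> n" and A: "A \<in> sets borel" by blast
    have hm: "(\<lambda>x. exp (R * hS i x)) \<in> borel_measurable ?P" by measurable
    have "S = ?V -` ((\<lambda>x. exp (R * hS i x)) -` A \<inter> space ?P) \<inter> space M"
      using measurable_space[OF Vm] i unfolding S by (auto simp: Zf_V[of i n] simp del: restrict_apply)
    also have "\<dots> \<in> sets (vimage_algebra (space M) ?V ?P)"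
      by (rule in_vimage_algebra) (rule measurable_sets[OF hm A])
    finally show "S \<in> sets (vimage_algebra (space M) ?V ?P)" .
  qed
  then have "sigma_sets (space (vimage_algebra (space M) ?V ?P)) ?G \<subseteq> sets (vimage_algebra (space M) ?V ?P)"
    by (rule sets.sigma_sets_subset)
  then have sub: "sets (natural_filtration M Zf n) \<subseteq> sets (vimage_algebra (space M) ?V ?P)"
    unfolding st by (simp add: space_vimage_algebra)
  fix A assume "A \<in> sets (natural_filtration M Zf n)"
  with sub have "A \<in> sets (vimage_algebra (space M) ?V ?P)" by blast
  then show "\<exists>B\<in>sets ?P. A = ?V -` B \<inter> space M"
    using sets_vimage_algebra2[of ?V "space M" ?P] measurable_space[OF Vm] by auto
qed

lemma super_step:
  assumes n: "n \<ge> 1"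
  shows "AE \<omega> in M. real_cond_exp M (natural_filtration M Zf n) (Zf (Suc n)) \<omega> \<le> Zf n \<omega>"
proof -
  let ?F = "natural_filtration M Zf n"
  let ?V = "\<lambda>\<omega>. restrict (\<lambda>i. Zv i \<omega>) (Kr n)"
  let ?P = "PiM (Kr n) (\<lambda>_. borel) :: (nat + nat + nat \<Rightarrow> real) measure"
  have Vm[measurable]: "?V \<in> measurable M ?P" by (rule VK_meas[OF Kr_sub])
  note fp = filt_props[OF n]
  have "finite_measure_subalgebra M ?F"
    unfolding finite_measure_subalgebra_def finite_measure_subalgebra_axioms_def
    using fp(1) finite_measure_axioms by auto
  then interpret S: sigma_finite_subalgebra M ?F by (rule finite_measure_subalgebra_is_sigma_finite)
  define c where "c = real_cond_exp M ?F (Zf (Suc n))"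
  have cF[measurable]: "c \<in> borel_measurable ?F" unfolding c_def by (rule borel_measurable_cond_exp)
  have ZF[measurable]: "Zf n \<in> borel_measurable ?F" by (rule fp(2))
  have spF: "space ?F = space M" using fp(1) by (simp add: subalgebra_def)
  define A where "A = {\<omega> \<in> space M. Zf n \<omega> < c \<omega>}"
  have AF: "A \<in> sets ?F"
  proof -
    have "{\<omega> \<in> space ?F. Zf n \<omega> < c \<omega>} \<in> sets ?F" by measurable
    then show ?thesis unfolding A_def spF .
  qed
  have AM[measurable]: "A \<in> sets M" using AF fp(1) by (auto simp: subalgebra_def)
  have cint: "integrable M c" unfolding c_def by (rule S.real_cond_exp_int(1)[OF Zf_int])
  have i1: "(\<integral>x\<in>A. Zf (Suc n) x \<partial>M) = (\<integral>x\<in>A. c x \<partial>M)"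
    unfolding c_def by (rule S.real_cond_exp_intA[OF Zf_int AF])
  obtain B where B: "B \<in> sets ?P" and AB: "A = ?V -` B \<inter> space M" using fp(3)[OF AF] by blast
  have Bm[measurable]: "B \<in> sets ?P" by (rule B)
  have i2: "(\<integral>x\<in>A. Zf (Suc n) x \<partial>M) \<le> (\<integral>x\<in>A. Zf n x \<partial>M)"
  proof -
    define f where "f = (\<lambda>x. ennreal (indicator B x * exp (R * hS n x)))"
    have fm[measurable]: "f \<in> borel_measurable ?P" unfolding f_def by measurable
    have intA: "integrable M (\<lambda>x. indicator A x * Zf m x)" for m using integrable_mult_indicator[OF AM Zf_int] by simp
    have iA: "\<omega> \<in> space M \<Longrightarrow> indicator A \<omega> = (indicator B (?V \<omega>) :: real)" for \<omega>
      unfolding AB by (simp add: indicator_def)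
    have "ennreal (\<integral>x\<in>A. Zf (Suc n) x \<partial>M) = (\<integral>\<^sup>+x. ennreal (indicator A x * Zf (Suc n) x) \<partial>M)"
      unfolding set_lebesgue_integral_def
      using intA by (subst nn_integral_eq_integral) (auto simp: Zf_def)
    also have "\<dots> = (\<integral>\<^sup>+\<omega>. f (?V \<omega>) * ennreal (exp (R * hD n (?V \<omega>) * (Y (Suc n) \<omega> - X (Suc n) \<omega>))) \<partial>M)"
      by (intro nn_integral_cong)
        (simp add: iA f_def Zf_hS hS_step hS_restr hD_restr ennreal_mult'[symmetric] mult_exp_exp algebra_simps del: restrict_apply)
    also have "\<dots> \<le> (\<integral>\<^sup>+\<omega>. f (?V \<omega>) \<partial>M)"
      by (rule keyN) (auto simp: hD_pos less_imp_le hD_le1)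
    also have "\<dots> = (\<integral>\<^sup>+x. ennreal (indicator A x * Zf n x) \<partial>M)"
      by (intro nn_integral_cong) (simp add: iA f_def Zf_hS hS_restr del: restrict_apply)
    also have "\<dots> = ennreal (\<integral>x\<in>A. Zf n x \<partial>M)"
      unfolding set_lebesgue_integral_def
      using intA by (subst nn_integral_eq_integral) (auto simp: Zf_def)
    finally show ?thesis
      by (subst (asm) ennreal_le_iff) (auto simp: set_lebesgue_integral_def Zf_def intro!: integral_nonneg_AE)
  qed
  have dint: "integrable M (\<lambda>x. indicator A x * (c x - Zf n x))"
    using integrable_mult_indicator[OF AM Bochner_Integration.integrable_diff[OF cint Zf_int]] by simp
  have ic: "integrable M (\<lambda>x. indicator A x * c x)" using integrable_mult_indicator[OF AM cint] by simp
  have iz: "integrable M (\<lambda>x. indicator A x * Zf n x)" using integrable_mult_indicator[OF AM Zf_int] by simp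
  have "(\<integral>x. indicator A x * (c x - Zf n x) \<partial>M) = (\<integral>x\<in>A. c x \<partial>M) - (\<integral>x\<in>A. Zf n x \<partial>M)"
    unfolding set_lebesgue_integral_def
    by (simp add: right_diff_distrib Bochner_Integration.integral_diff[OF ic iz])
  also have "\<dots> \<le> 0" using i1 i2 by simp
  finally have le0: "(\<integral>x. indicator A x * (c x - Zf n x) \<partial>M) \<le> 0" .
  have nn: "\<And>x. 0 \<le> indicator A x * (c x - Zf n x)" by (auto simp: indicator_def A_def)
  have "(\<integral>x. indicator A x * (c x - Zf n x) \<partial>M) = 0"
  proof -
    have "0 \<le> (\<integral>x. indicator A x * (c x - Zf n x) \<partial>M)"
      by (rule Bochner_Integration.integral_nonneg) (rule nn)
    then show ?thesis using le0 by linarith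
  qed
  then have "AE x in M. indicator A x * (c x - Zf n x) = 0"
    using integral_nonneg_eq_0_iff_AE[OF dint] nn by auto
  with AE_space show ?thesis
    by eventually_elim (auto simp: c_def A_def indicator_def split: if_splits)
qed

lemma main: "supermartingale M (\<lambda>n \<omega>. exp (R * disc_loss X Y I n \<omega>)) \<and> (\<forall>u>0. ruin_prob M X Y I u \<le> exp (- R * u))"
proof -
  have "(\<lambda>n \<omega>. exp (R * disc_loss X Y I n \<omega>)) = Zf" by (simp add: fun_eq_iff Zf_def)
  moreover have "supermartingale M Zf"
    unfolding supermartingale_def by (blast intro: Zf_meas Zf_int super_step)
  ultimately show ?thesis using ruin by simp
qed

end

theorem lemma2p5:
  fixes M :: "'a measure"
    and X Y I :: "nat \<Rightarrow> 'a \<Rightarrow> real"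
    and R :: real
  assumes "prob_space M"
    and indep: "prob_space.indep_vars M (\<lambda>_. borel)
                  (case_sum X (case_sum Y I)) ({Inl n | n. n \<ge> 1} \<union> {Inr (Inl n) | n. n \<ge> 1} \<union> {Inr (Inr n) | n. n \<ge> 1})"
    and rvX: "\<And>n. n \<ge> 1 \<Longrightarrow> X n \<in> borel_measurable M"
    and rvY: "\<And>n. n \<ge> 1 \<Longrightarrow> Y n \<in> borel_measurable M"
    and rvI: "\<And>n. n \<ge> 1 \<Longrightarrow> I n \<in> borel_measurable M"
    and idX: "\<And>n. n \<ge> 1 \<Longrightarrow> distr M borel (X n) = distr M borel (X 1)"
    and idY: "\<And>n. n \<ge> 1 \<Longrightarrow> distr M borel (Y n) = distr M borel (Y 1)"
    and idI: "\<And>n. n \<ge> 1 \<Longrightarrow> distr M borel (I n) = distr M borel (I 1)"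
    and nnX: "\<And>n \<omega>. n \<ge> 1 \<Longrightarrow> \<omega> \<in> space M \<Longrightarrow> X n \<omega> \<ge> 0"
    and nnY: "\<And>n \<omega>. n \<ge> 1 \<Longrightarrow> \<omega> \<in> space M \<Longrightarrow> Y n \<omega> \<ge> 0"
    and nnI: "\<And>n \<omega>. n \<ge> 1 \<Longrightarrow> \<omega> \<in> space M \<Longrightarrow> I n \<omega> \<ge> 0"
    and intX: "\<And>n. n \<ge> 1 \<Longrightarrow> integrable M (X n)"
    and intY: "\<And>n. n \<ge> 1 \<Longrightarrow> integrable M (Y n)"
    and intI: "\<And>n. n \<ge> 1 \<Longrightarrow> integrable M (I n)"
    and Rpos: "R > 0"
    and Rexp: "(\<integral>\<^sup>+ \<omega>. ennreal (exp (R * (Y 1 \<omega> - X 1 \<omega>))) \<partial>M) \<le> 1"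
  shows "supermartingale M (\<lambda>n \<omega>. exp (R * disc_loss X Y I n \<omega>))
         \<and> (\<forall>u>0. ruin_prob M X Y I u \<le> exp (- R * u))"
proof -
  interpret rsetup M X Y I R
  proof (rule rsetup.intro)
    show "prob_space M" by fact
    show "rsetup_axioms M X Y I R"
    proof (rule rsetup_axioms.intro)
      show "prob_space.indep_vars M (\<lambda>_. borel) (case_sum X (case_sum Y I)) idx"
        using indep unfolding idx_def .
    qed (fact idX idY nnI Rpos Rexp)+
  qed
  show ?thesis by (rule main)
qed

end
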